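(* Let $T$ be a ditree such that every source set of size at least $2$ and every sink set of size at least $2$ contains a leaf of $T$. Let $S\subseteq V(T)$ be the set of all sinks, all sources and all leaves of $T$. Then $S$ is a geodetic set of $T$ of minimum size.
   Context: All digraphs are finite, without loops or parallel arcs. The underlying undirected graph of a digraph is obtained by forgetting orientations and deleting parallel edges. A ditree is a digraph whose underlying undirected graph is a tree (it may contain $2$-cycles, i.e., pairs of opposite arcs $uv,vu$). A leaf is a vertex of degree $1$ in the underlying undirected graph. A source is a vertex with no in-neighbour; a sink is a vertex with no out-neighbour. For $S\subseteq V(D)$, $N^-(S)$ (resp. $N^+(S)$) is the set of vertices outside $S$ having an arc to (resp. from) some vertex of $S$. A source set is a maximal strongly connected component $S$ with $N^-(S)\setminus S=\emptyset$; a sink set is a maximal strongly connected component $S$ with $N^+(S)\setminus S=\emptyset$. For vertices $u,v$, $I(u,v)$ is the set of vertices on some shortest directed path from $u$ to $v$; for $S\subseteq V(D)$, $I(S)=\bigcup_{u,v\in S}(I(u,v)\cup I(v,u))$. A geodetic set is a set $S$ with $I(S)=V(D)$. *)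

theory Defs
  imports Main
begin

definition digraph :: "'a set \<Rightarrow> ('a \<times> 'a) set \<Rightarrow> bool" where
  "digraph V A \<longleftrightarrow> finite V \<and> A \<subseteq> V \<times> V \<and> (\<forall>v. (v, v) \<notin> A)"

definition uadj :: "('a \<times> 'a) set \<Rightarrow> 'a \<Rightarrow> 'a \<Rightarrow> bool" where
  "uadj A u v \<longleftrightarrow> (u, v) \<in> A \<or> (v, u) \<in> A"

definition uconnected :: "'a set \<Rightarrow> ('a \<times> 'a) set \<Rightarrow> bool" where
  "uconnected V A \<longleftrightarrow> V \<noteq> {} \<and>
     (\<forall>u\<in>V. \<forall>v\<in>V. (u, v) \<in> {(x, y). uadj A x y}\<^sup>*)"

definition ucycle :: "('a \<times> 'a) set \<Rightarrow> 'a list \<Rightarrow> bool" where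
  "ucycle A cs \<longleftrightarrow> length cs \<ge> 3 \<and> distinct cs \<and>
     (\<forall>i. Suc i < length cs \<longrightarrow> uadj A (cs ! i) (cs ! Suc i)) \<and>
     uadj A (last cs) (hd cs)"

definition ditree :: "'a set \<Rightarrow> ('a \<times> 'a) set \<Rightarrow> bool" where
  "ditree V A \<longleftrightarrow> digraph V A \<and> uconnected V A \<and> (\<nexists>cs. ucycle A cs)"

definition udegree :: "'a set \<Rightarrow> ('a \<times> 'a) set \<Rightarrow> 'a \<Rightarrow> nat" where
  "udegree V A v = card {w \<in> V. uadj A v w}"

definition leaf :: "'a set \<Rightarrow> ('a \<times> 'a) set \<Rightarrow> 'a \<Rightarrow> bool" where
  "leaf V A v \<longleftrightarrow> v \<in> V \<and> udegree V A v = 1"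

definition source :: "'a set \<Rightarrow> ('a \<times> 'a) set \<Rightarrow> 'a \<Rightarrow> bool" where
  "source V A v \<longleftrightarrow> v \<in> V \<and> (\<nexists>u. (u, v) \<in> A)"

definition sink :: "'a set \<Rightarrow> ('a \<times> 'a) set \<Rightarrow> 'a \<Rightarrow> bool" where
  "sink V A v \<longleftrightarrow> v \<in> V \<and> (\<nexists>w. (v, w) \<in> A)"

definition in_nbh :: "('a \<times> 'a) set \<Rightarrow> 'a set \<Rightarrow> 'a set" where
  "in_nbh A S = {u. u \<notin> S \<and> (\<exists>s\<in>S. (u, s) \<in> A)}"

definition out_nbh :: "('a \<times> 'a) set \<Rightarrow> 'a set \<Rightarrow> 'a set" where
  "out_nbh A S = {u. u \<notin> S \<and> (\<exists>s\<in>S. (s, u) \<in> A)}"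

definition strongly_connected :: "'a set \<Rightarrow> ('a \<times> 'a) set \<Rightarrow> 'a set \<Rightarrow> bool" where
  "strongly_connected V A S \<longleftrightarrow> S \<noteq> {} \<and> S \<subseteq> V \<and>
     (\<forall>u\<in>S. \<forall>v\<in>S. (u, v) \<in> (A \<inter> (S \<times> S))\<^sup>*)"

definition max_scc :: "'a set \<Rightarrow> ('a \<times> 'a) set \<Rightarrow> 'a set \<Rightarrow> bool" where
  "max_scc V A S \<longleftrightarrow> strongly_connected V A S \<and>
     (\<forall>S'. S \<subseteq> S' \<and> strongly_connected V A S' \<longrightarrow> S' = S)"

definition source_set :: "'a set \<Rightarrow> ('a \<times> 'a) set \<Rightarrow> 'a set \<Rightarrow> bool" where
  "source_set V A S \<longleftrightarrow> max_scc V A S \<and> in_nbh A S - S = {}"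

definition sink_set :: "'a set \<Rightarrow> ('a \<times> 'a) set \<Rightarrow> 'a set \<Rightarrow> bool" where
  "sink_set V A S \<longleftrightarrow> max_scc V A S \<and> out_nbh A S - S = {}"

definition dwalk :: "('a \<times> 'a) set \<Rightarrow> 'a list \<Rightarrow> bool" where
  "dwalk A xs \<longleftrightarrow> xs \<noteq> [] \<and> (\<forall>i. Suc i < length xs \<longrightarrow> (xs ! i, xs ! Suc i) \<in> A)"

definition dpath :: "('a \<times> 'a) set \<Rightarrow> 'a list \<Rightarrow> bool" where
  "dpath A xs \<longleftrightarrow> dwalk A xs \<and> distinct xs"

definition shortest_path :: "('a \<times> 'a) set \<Rightarrow> 'a \<Rightarrow> 'a \<Rightarrow> 'a list \<Rightarrow> bool" where
  "shortest_path A u v xs \<longleftrightarrow> dpath A xs \<and> hd xs = u \<and> last xs = v \<and>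
     (\<forall>ys. dpath A ys \<and> hd ys = u \<and> last ys = v \<longrightarrow> length xs \<le> length ys)"

definition interval :: "('a \<times> 'a) set \<Rightarrow> 'a \<Rightarrow> 'a \<Rightarrow> 'a set" where
  "interval A u v = {w. \<exists>xs. shortest_path A u v xs \<and> w \<in> set xs}"

definition interval_set :: "('a \<times> 'a) set \<Rightarrow> 'a set \<Rightarrow> 'a set" where
  "interval_set A S = (\<Union>u\<in>S. \<Union>v\<in>S. interval A u v \<union> interval A v u)"

definition geodetic :: "'a set \<Rightarrow> ('a \<times> 'a) set \<Rightarrow> 'a set \<Rightarrow> bool" where
  "geodetic V A S \<longleftrightarrow> S \<subseteq> V \<and> interval_set A S = V"

end

theory Submission
  imports Defs
begin


lemma uadj_sym: "uadj A x y = uadj A y x" by (auto simp: uadj_def)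
lemma uadj_converse[simp]: "uadj (A\<inverse>) = uadj A" by (auto simp: uadj_def fun_eq_iff)

lemma digraph_uadjV: "digraph V A \<Longrightarrow> uadj A x y \<Longrightarrow> x \<in> V \<and> y \<in> V"
  by (auto simp: digraph_def uadj_def)
lemma digraph_uadj_neq: "digraph V A \<Longrightarrow> uadj A x y \<Longrightarrow> x \<noteq> y"
  by (auto simp: digraph_def uadj_def)

lemma dwalk_Cons2: "dwalk R (a # b # xs) = ((a,b) \<in> R \<and> dwalk R (b # xs))"
proof
  assume h: "dwalk R (a # b # xs)"
  have "(a,b) \<in> R" using h unfolding dwalk_def by (metis length_Cons nth_Cons_0 nth_Cons_Suc zero_less_Suc Suc_less_eq)
  moreover have "dwalk R (b # xs)" using h unfolding dwalk_def
    by (metis Suc_less_eq length_Cons list.distinct(1) nth_Cons_Suc)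
  ultimately show "(a,b) \<in> R \<and> dwalk R (b # xs)" by simp
next
  assume h: "(a,b) \<in> R \<and> dwalk R (b # xs)"
  show "dwalk R (a # b # xs)" unfolding dwalk_def
  proof (intro conjI allI impI)
    fix i assume i: "Suc i < length (a # b # xs)"
    show "((a # b # xs) ! i, (a # b # xs) ! Suc i) \<in> R"
    proof (cases i)
      case 0 then show ?thesis using h by simp
    next
      case (Suc j) then show ?thesis using h i unfolding dwalk_def by auto
    qed
  qed simp
qed

lemma dwalk_single[simp]: "dwalk R [a]" by (simp add: dwalk_def)

lemma dwalk_rtrancl: "dwalk R xs \<Longrightarrow> (hd xs, last xs) \<in> R\<^sup>*"
proof (induction xs)
  case Nil then show ?case by (simp add: dwalk_def)
next
  case (Cons a xs)
  show ?case
  proof (cases xs)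
    case Nil then show ?thesis by simp
  next
    case (Cons b ys)
    with Cons.prems have "(a,b) \<in> R" "dwalk R xs" by (auto simp: dwalk_Cons2)
    with Cons.IH Cons show ?thesis by (auto intro: converse_rtrancl_into_rtrancl)
  qed
qed

lemma dwalk_suffix: "dwalk R (ys @ zs) \<Longrightarrow> zs \<noteq> [] \<Longrightarrow> dwalk R zs"
  unfolding dwalk_def
proof (intro conjI allI impI)
  fix i assume h: "ys @ zs \<noteq> [] \<and> (\<forall>i. Suc i < length (ys @ zs) \<longrightarrow> ((ys @ zs) ! i, (ys @ zs) ! Suc i) \<in> R)"
    and z: "zs \<noteq> []" and i: "Suc i < length zs"
  have "Suc (length ys + i) < length (ys @ zs)" using i by simp
  then have "((ys @ zs) ! (length ys + i), (ys @ zs) ! Suc (length ys + i)) \<in> R" using h by blast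
  moreover have "(ys @ zs) ! (length ys + i) = zs ! i" by (rule nth_append_length_plus)
  moreover have "(ys @ zs) ! Suc (length ys + i) = zs ! Suc i" using nth_append_length_plus[of ys zs "Suc i"] by simp
  ultimately show "(zs ! i, zs ! Suc i) \<in> R" by simp
qed

lemma rtrancl_dpath: "(u,v) \<in> R\<^sup>* \<Longrightarrow> \<exists>xs. dpath R xs \<and> hd xs = u \<and> last xs = v"
proof (induction rule: converse_rtrancl_induct)
  case base
  then show ?case by (intro exI[of _ "[v]"]) (simp add: dpath_def)
next
  case (step u u')
  then obtain xs where xs: "dpath R xs" "hd xs = u'" "last xs = v" by blast
  show ?case
  proof (cases "u \<in> set xs")
    case True
    then obtain ys zs where sp: "xs = ys @ u # zs" by (meson split_list)
    have "dpath R (u # zs)" using xs(1) sp dwalk_suffix[of R ys "u # zs"] by (auto simp: dpath_def)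
    moreover have "last (u # zs) = v" using xs(3) sp by simp
    ultimately show ?thesis by (intro exI[of _ "u # zs"]) simp
  next
    case False
    obtain ys where ys: "xs = u' # ys" using xs(1,2) by (cases xs) (auto simp: dpath_def dwalk_def)
    have "dpath R (u # xs)" using False xs(1) step(1) ys by (auto simp: dpath_def dwalk_Cons2)
    moreover have "last (u # xs) = v" using xs(3) ys by simp
    ultimately show ?thesis by (intro exI[of _ "u # xs"]) simp
  qed
qed

lemma shortest_exists:
  assumes "dpath A xs" "hd xs = u" "last xs = v"
  shows "\<exists>ys. shortest_path A u v ys"
proof -
  obtain ys where "dpath A ys \<and> hd ys = u \<and> last ys = v"
    "\<forall>zs. dpath A zs \<and> hd zs = u \<and> last zs = v \<longrightarrow> length ys \<le> length zs"
    using ex_has_least_nat[of "\<lambda>ys. dpath A ys \<and> hd ys = u \<and> last ys = v" xs length] assms by blast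
  then show ?thesis unfolding shortest_path_def by blast
qed




lemma interval_special:
  assumes dg: "digraph V A" and wi: "w \<in> interval A u v"
    and sp: "source V A w \<or> sink V A w \<or> leaf V A w"
  shows "w = u \<or> w = v"
proof -
  obtain xs where xs: "shortest_path A u v xs" "w \<in> set xs" using wi unfolding interval_def by blast
  then have dw: "dwalk A xs" and dist: "distinct xs" and hl: "hd xs = u" "last xs = v"
    unfolding shortest_path_def dpath_def by auto
  obtain i where i: "i < length xs" "xs ! i = w" using xs(2) by (meson in_set_conv_nth)
  have ne: "xs \<noteq> []" using dw by (simp add: dwalk_def)
  show ?thesis
  proof (cases "i = 0")
    case True then show ?thesis using i hl ne by (simp add: hd_conv_nth)
  next
    case False
    show ?thesis
    proof (cases "Suc i = length xs")
      case True
      then have "i = length xs - 1" by simp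
      then show ?thesis using i hl ne by (simp add: last_conv_nth)
    next
      case False2: False
      have si: "Suc i < length xs" using i False2 by simp
      have a1: "(xs ! (i - 1), w) \<in> A" using dw i False unfolding dwalk_def
        by (metis Suc_pred' bot_nat_0.not_eq_extremum less_imp_diff_less)
      have a2: "(w, xs ! Suc i) \<in> A" using dw i si unfolding dwalk_def by auto
      have neq: "xs ! (i - 1) \<noteq> xs ! Suc i"
        using dist si nth_eq_iff_index_eq[of xs "i - 1" "Suc i"] by auto
      have "\<not> leaf V A w"
      proof
        assume lf: "leaf V A w"
        have "{xs ! (i - 1), xs ! Suc i} \<subseteq> {y \<in> V. uadj A w y}"
          using a1 a2 dg by (auto simp: uadj_def digraph_def)
        moreover have "finite {y \<in> V. uadj A w y}" using dg by (simp add: digraph_def)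
        ultimately have "card {xs ! (i - 1), xs ! Suc i} \<le> card {y \<in> V. uadj A w y}"
          by (rule card_mono[rotated])
        then show False using lf neq by (simp add: leaf_def udegree_def)
      qed
      moreover have "\<not> source V A w" using a1 by (auto simp: source_def)
      moreover have "\<not> sink V A w" using a2 by (auto simp: sink_def)
      ultimately show ?thesis using sp by blast
    qed
  qed
qed

lemma minimality:
  assumes dg: "digraph V A" and g: "geodetic V A S'"
  shows "card {v \<in> V. sink V A v \<or> source V A v \<or> leaf V A v} \<le> card S'"
proof -
  have sub: "{v \<in> V. sink V A v \<or> source V A v \<or> leaf V A v} \<subseteq> S'"
  proof
    fix w assume w: "w \<in> {v \<in> V. sink V A v \<or> source V A v \<or> leaf V A v}"
    then have "w \<in> interval_set A S'" using g by (auto simp: geodetic_def)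
    then obtain u v where uv: "u \<in> S'" "v \<in> S'" "w \<in> interval A u v \<or> w \<in> interval A v u"
      unfolding interval_set_def by blast
    then show "w \<in> S'" using interval_special[OF dg, of w] w by blast
  qed
  have "finite S'" using g dg by (auto simp: geodetic_def digraph_def intro: finite_subset)
  then show ?thesis using sub by (rule card_mono)
qed



lemma ditree_converse: "ditree V (A\<inverse>) = ditree V A"
  unfolding ditree_def digraph_def uconnected_def ucycle_def by auto
lemma leaf_converse[simp]: "leaf V (A\<inverse>) = leaf V A"
  by (simp add: fun_eq_iff leaf_def udegree_def)
lemma source_converse[simp]: "source V (A\<inverse>) = sink V A"
  by (auto simp: fun_eq_iff source_def sink_def)
lemma sink_converse[simp]: "sink V (A\<inverse>) = source V A"
  by (auto simp: fun_eq_iff source_def sink_def)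
lemma sc_converse[simp]: "strongly_connected V (A\<inverse>) Z = strongly_connected V A Z"
proof -
  have e: "A\<inverse> \<inter> Z \<times> Z = (A \<inter> Z \<times> Z)\<inverse>" by auto
  show ?thesis unfolding strongly_connected_def e rtrancl_converse by auto
qed
lemma source_set_converse: "source_set V (A\<inverse>) Z = sink_set V A Z"
  unfolding source_set_def sink_set_def max_scc_def in_nbh_def out_nbh_def by auto



lemma closed_rtrancl:
  assumes cl: "\<forall>a b. (a,b) \<in> R \<longrightarrow> b \<in> Z \<longrightarrow> a \<in> Z" and ab: "(a,b) \<in> R\<^sup>*" and b: "b \<in> Z"
  shows "a \<in> Z"
  using ab b by (induction rule: converse_rtrancl_induct) (use cl in blast)+

lemma closed_rtrancl_restrict:
  assumes cl: "\<forall>a b. (a,b) \<in> R \<longrightarrow> b \<in> Z \<longrightarrow> a \<in> Z"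
    and ab: "(a,b) \<in> R\<^sup>*" and b: "b \<in> Z"
  shows "(a,b) \<in> (R \<inter> Z \<times> Z)\<^sup>*"
  using ab b
proof (induction rule: converse_rtrancl_induct)
  case base then show ?case by simp
next
  case (step y z)
  then have "z \<in> Z" using closed_rtrancl[OF cl] by blast
  then have "y \<in> Z" using cl step by blast
  with step \<open>z \<in> Z\<close> show ?case by (auto intro: converse_rtrancl_into_rtrancl)
qed



lemma SRC0:
  assumes fin: "finite F" and RF: "R \<subseteq> F \<times> F" and x: "x \<in> F"
  shows "\<exists>Z. Z \<noteq> {} \<and> Z \<subseteq> F \<and> (\<forall>y\<in>Z. (y,x) \<in> R\<^sup>*) \<and> (\<forall>a b. (a,b) \<in> R \<longrightarrow> b \<in> Z \<longrightarrow> a \<in> Z)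
     \<and> (\<forall>y\<in>Z. \<forall>y'\<in>Z. (y,y') \<in> (R \<inter> Z \<times> Z)\<^sup>*)"
proof -
  define anc where "anc y = {a. (a,y) \<in> R\<^sup>*}" for y
  have ancF: "anc y \<subseteq> insert y F" for y
  proof
    fix a assume "a \<in> anc y"
    then have "(a,y) \<in> R\<^sup>*" by (simp add: anc_def)
    then show "a \<in> insert y F" using RF by (cases rule: converse_rtranclE) auto
  qed
  have financ: "finite (anc y)" for y using ancF[of y] fin by (meson finite_insert finite_subset)
  obtain z where z: "z \<in> anc x" and zmin: "\<forall>y. y \<in> anc x \<longrightarrow> card (anc z) \<le> card (anc y)"
  proof -
    have "x \<in> anc x" by (simp add: anc_def)
    from ex_has_least_nat[of "\<lambda>y. y \<in> anc x", OF this, of "\<lambda>y. card (anc y)"] that show ?thesis by blast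
  qed
  have zF: "z \<in> F" using ancF[of x] z x by auto
  define Z where "Z = anc z"
  have cl: "\<forall>a b. (a,b) \<in> R \<longrightarrow> b \<in> Z \<longrightarrow> a \<in> Z"
    by (auto simp: Z_def anc_def intro: converse_rtrancl_into_rtrancl)
  have reach: "(z,y) \<in> R\<^sup>*" if y: "y \<in> Z" for y
  proof -
    have yz: "(y,z) \<in> R\<^sup>*" using y by (simp add: Z_def anc_def)
    have sub: "anc y \<subseteq> anc z" unfolding anc_def using yz rtrancl_trans[of _ y R z] by blast
    have "(z,x) \<in> R\<^sup>*" using z by (simp add: anc_def)
    then have "y \<in> anc x" unfolding anc_def using yz rtrancl_trans[of y z R x] by blast
    then have "card (anc z) \<le> card (anc y)" using zmin by blast
    moreover have "card (anc y) \<le> card (anc z)" using card_mono[OF financ sub] .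
    ultimately have "card (anc y) = card (anc z)" by linarith
    then have "anc y = anc z" using card_subset_eq[OF financ sub] by blast
    moreover have "z \<in> anc z" by (simp add: anc_def)
    ultimately have "z \<in> anc y" by simp
    then show ?thesis by (simp add: anc_def)
  qed
  have f1: "\<forall>y\<in>Z. \<forall>y'\<in>Z. (y,y') \<in> (R \<inter> Z \<times> Z)\<^sup>*"
  proof (intro ballI)
    fix y y' assume "y \<in> Z" "y' \<in> Z"
    then have "(y,z) \<in> R\<^sup>*" "(z,y') \<in> R\<^sup>*" using reach by (auto simp: Z_def anc_def)
    then have "(y,y') \<in> R\<^sup>*" by (rule rtrancl_trans)
    then show "(y,y') \<in> (R \<inter> Z \<times> Z)\<^sup>*" using closed_rtrancl_restrict[OF cl _ \<open>y' \<in> Z\<close>] by blast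
  qed
  have f2: "Z \<noteq> {}" by (auto simp: Z_def anc_def)
  have f3: "Z \<subseteq> F" using ancF[of z] zF by (auto simp: Z_def)
  have f4: "\<forall>y\<in>Z. (y,x) \<in> R\<^sup>*"
  proof
    fix y assume "y \<in> Z"
    then have "(y,z) \<in> R\<^sup>*" by (simp add: Z_def anc_def)
    moreover have "(z,x) \<in> R\<^sup>*" using z by (simp add: anc_def)
    ultimately show "(y,x) \<in> R\<^sup>*" by (rule rtrancl_trans)
  qed
  show ?thesis by (rule exI[of _ Z]) (intro conjI f1 f2 f3 f4 cl)
qed



lemma scc_closed_source_set:
  assumes sc: "strongly_connected V A Z" and cl: "\<forall>a b. (a,b) \<in> A \<longrightarrow> b \<in> Z \<longrightarrow> a \<in> Z"
  shows "source_set V A Z"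
proof -
  have "in_nbh A Z = {}" using cl by (auto simp: in_nbh_def)
  moreover have "S' = Z" if "Z \<subseteq> S'" "strongly_connected V A S'" for S'
  proof
    obtain z where z: "z \<in> Z" using sc by (auto simp: strongly_connected_def)
    show "S' \<subseteq> Z"
    proof
      fix s assume "s \<in> S'"
      then have "(s,z) \<in> (A \<inter> S' \<times> S')\<^sup>*" using that z by (auto simp: strongly_connected_def)
      then have "(s,z) \<in> A\<^sup>*" using rtrancl_mono[of "A \<inter> S' \<times> S'" A] by blast
      then show "s \<in> Z" using closed_rtrancl[OF cl] z by blast
    qed
  qed (use that in simp)
  ultimately show ?thesis using sc by (auto simp: source_set_def max_scc_def)
qed



lemma source_set_hasS:
  assumes dg: "digraph V A" and hyp: "\<And>X. source_set V A X \<Longrightarrow> card X \<ge> 2 \<Longrightarrow> \<exists>v\<in>X. leaf V A v"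
    and ss: "source_set V A Z"
  shows "\<exists>u\<in>Z. source V A u \<or> leaf V A u"
proof -
  have sc: "strongly_connected V A Z" using ss by (simp add: source_set_def max_scc_def)
  then have ZV: "Z \<subseteq> V" "Z \<noteq> {}" by (auto simp: strongly_connected_def)
  then have fin: "finite Z" using dg by (auto simp: digraph_def intro: finite_subset)
  show ?thesis
  proof (cases "card Z \<ge> 2")
    case True then show ?thesis using hyp ss by blast
  next
    case False
    then have "card Z = 1" using fin ZV card_0_eq[OF fin] by linarith
    then obtain z where Zz: "Z = {z}" by (meson card_1_singletonE)
    have "source V A z"
    proof -
      have "(a, z) \<notin> A" for a
      proof
        assume az: "(a,z) \<in> A"
        show False
        proof (cases "a = z")
          case True then show False using az dg by (auto simp: digraph_def)
        next
          case False
          then have "a \<in> in_nbh A Z" using az Zz by (auto simp: in_nbh_def)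
          then show False using ss Zz False by (auto simp: source_set_def)
        qed
      qed
      then show ?thesis using ZV Zz by (auto simp: source_def)
    qed
    then show ?thesis using Zz by blast
  qed
qed




definition Ew :: "('a \<times> 'a) set \<Rightarrow> 'a \<Rightarrow> ('a \<times> 'a) set" where
  "Ew A w = {(x,y). uadj A x y \<and> x \<noteq> w \<and> y \<noteq> w}"
definition br :: "('a \<times> 'a) set \<Rightarrow> 'a \<Rightarrow> 'a \<Rightarrow> 'a set" where
  "br A w n = {y. (n,y) \<in> (Ew A w)\<^sup>*}"

lemma br_converse[simp]: "br (A\<inverse>) w n = br A w n"
  by (simp add: br_def Ew_def)

lemma Ew_conv: "(Ew A w)\<inverse> = Ew A w"
  by (auto simp: Ew_def uadj_def)

lemma Ew_rtrancl_sym: "(x,y) \<in> (Ew A w)\<^sup>* \<Longrightarrow> (y,x) \<in> (Ew A w)\<^sup>*"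
  by (metis Ew_conv converse_iff rtrancl_converse)

lemma br_self: "n \<in> br A w n" by (simp add: br_def)

lemma br_neq_w:
  assumes dg: "digraph V A" and wn: "uadj A w n" and y: "y \<in> br A w n"
  shows "y \<noteq> w"
proof -
  have "(n,y) \<in> (Ew A w)\<^sup>*" using y by (simp add: br_def)
  then show ?thesis
  proof (cases rule: rtranclE)
    case base then show ?thesis using digraph_uadj_neq[OF dg wn] by simp
  next
    case (step z) then show ?thesis by (simp add: Ew_def)
  qed
qed

lemma br_closed:
  assumes dg: "digraph V A" and wn: "uadj A w n" and y: "y \<in> br A w n"
    and a: "uadj A y y'" and ne: "y' \<noteq> w"
  shows "y' \<in> br A w n"
proof -
  have "y \<noteq> w" using br_neq_w[OF dg wn y] .
  then have "(y,y') \<in> Ew A w" using a ne by (simp add: Ew_def)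
  then show ?thesis using y by (auto simp: br_def intro: rtrancl_into_rtrancl)
qed

lemma br_V:
  assumes dg: "digraph V A" and wn: "uadj A w n" and y: "y \<in> br A w n"
  shows "y \<in> V"
proof -
  have "(n,y) \<in> (Ew A w)\<^sup>*" using y by (simp add: br_def)
  then show ?thesis
  proof (cases rule: rtranclE)
    case base then show ?thesis using digraph_uadjV[OF dg wn] by simp
  next
    case (step z) then show ?thesis using digraph_uadjV[OF dg] by (auto simp: Ew_def)
  qed
qed

lemma dwalk_field: "dwalk R xs \<Longrightarrow> 2 \<le> length xs \<Longrightarrow> x \<in> set xs \<Longrightarrow> x \<in> Field R"
proof -
  assume dw: "dwalk R xs" and l: "2 \<le> length xs" and x: "x \<in> set xs"
  obtain i where i: "i < length xs" "xs ! i = x" using x by (meson in_set_conv_nth)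
  show ?thesis
  proof (cases "Suc i < length xs")
    case True then have "(xs ! i, xs ! Suc i) \<in> R" using dw by (simp add: dwalk_def)
    then show ?thesis using i by (auto simp: Field_def)
  next
    case False
    then have "Suc (i - 1) < length xs" "Suc (i - 1) = i" using i l by auto
    then have "(xs ! (i - 1), xs ! i) \<in> R" using dw unfolding dwalk_def by metis
    then show ?thesis using i by (auto simp: Field_def)
  qed
qed

lemma ucycle_contra:
  assumes "ditree V A" "ucycle A cs" shows False
  using assms by (auto simp: ditree_def)

lemma br_disjoint:
  assumes dt: "ditree V A" and n1: "uadj A w n1" and n2: "uadj A w n2"
    and y1: "y \<in> br A w n1" and y2: "y \<in> br A w n2"
  shows "n1 = n2"
proof (rule ccontr)
  assume ne: "n1 \<noteq> n2"
  have dg: "digraph V A" using dt by (simp add: ditree_def)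
  have "(n1,y) \<in> (Ew A w)\<^sup>*" "(y,n2) \<in> (Ew A w)\<^sup>*"
    using y1 y2 Ew_rtrancl_sym by (auto simp: br_def)
  then have "(n1,n2) \<in> (Ew A w)\<^sup>*" by (rule rtrancl_trans)
  then obtain xs where xs: "dpath (Ew A w) xs" "hd xs = n1" "last xs = n2"
    using rtrancl_dpath by metis
  have xne: "xs \<noteq> []" using xs by (simp add: dpath_def dwalk_def)
  have l2: "2 \<le> length xs"
  proof (rule ccontr)
    assume a2: "\<not> 2 \<le> length xs"
    have "length xs \<noteq> 0" using xne by simp
    then have "length xs = 1" using a2 by linarith
    then obtain a where "xs = [a]" by (auto simp: length_Suc_conv)
    then show False using xs ne by simp
  qed
  have wn: "w \<notin> set xs"
  proof
    assume "w \<in> set xs"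
    then have "w \<in> Field (Ew A w)" using dwalk_field[OF _ l2] xs by (auto simp: dpath_def)
    then show False by (auto simp: Field_def Ew_def)
  qed
  have "ucycle A (w # xs)"
    unfolding ucycle_def
  proof (intro conjI allI impI)
    show "3 \<le> length (w # xs)" using l2 by simp
    show "distinct (w # xs)" using wn xs by (simp add: dpath_def)
    show "uadj A (last (w # xs)) (hd (w # xs))" using xne xs n2 uadj_sym by (metis last_ConsR list.sel(1))
    fix i assume i: "Suc i < length (w # xs)"
    show "uadj A ((w # xs) ! i) ((w # xs) ! Suc i)"
    proof (cases i)
      case 0 then show ?thesis using xne xs n1 by (simp add: hd_conv_nth)
    next
      case (Suc j)
      then have "(xs ! j, xs ! Suc j) \<in> Ew A w" using xs i by (simp add: dpath_def dwalk_def)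
      then show ?thesis using Suc by (simp add: Ew_def)
    qed
  qed
  then show False using ucycle_contra[OF dt] by blast
qed

lemma br_cover:
  assumes dt: "ditree V A" and w: "w \<in> V" and y: "y \<in> V" and yw: "y \<noteq> w"
  shows "\<exists>n. uadj A w n \<and> y \<in> br A w n"
proof -
  have "(w,y) \<in> {(x, y). uadj A x y}\<^sup>*" using dt w y by (auto simp: ditree_def uconnected_def)
  then have "y = w \<or> (\<exists>n. uadj A w n \<and> y \<in> br A w n)"
  proof (induction rule: rtrancl_induct)
    case base then show ?case by simp
  next
    case (step y z)
    show ?case
    proof (cases "z = w")
      case True then show ?thesis by simp
    next
      case False
      show ?thesis
      proof (cases "y = w")
        case True then show ?thesis using step(2) False by (auto intro: br_self)
      next
        case yw: False
        then obtain n where n: "uadj A w n" "(n,y) \<in> (Ew A w)\<^sup>*" using step(3) by (auto simp: br_def)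
        have "(y,z) \<in> Ew A w" using step(2) yw False by (simp add: Ew_def)
        then show ?thesis using n by (auto simp: br_def intro: rtrancl_into_rtrancl)
      qed
    qed
  qed
  then show ?thesis using yw by blast
qed

lemma br_boundary:
  assumes dt: "ditree V A" and wn: "uadj A w n" and x: "x \<in> br A w n"
    and a: "uadj A x y" and y: "y \<notin> br A w n"
  shows "y = w \<and> x = n"
proof -
  have dg: "digraph V A" using dt by (simp add: ditree_def)
  have yw: "y = w" using br_closed[OF dg wn x a] y by blast
  have "uadj A w x" using a yw uadj_sym by metis
  then have "x = n" using br_disjoint[OF dt _ wn br_self x] by blast
  then show ?thesis using yw by simp
qed

lemma walk_cross:
  assumes dg: "digraph V A" and wn: "uadj A w n"
  shows "dwalk A xs \<Longrightarrow> hd xs \<in> br A w n \<Longrightarrow> last xs \<notin> br A w n \<Longrightarrow> w \<in> set xs"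
proof (induction xs)
  case Nil then show ?case by (simp add: dwalk_def)
next
  case (Cons a xs)
  show ?case
  proof (cases xs)
    case Nil then show ?thesis using Cons.prems by simp
  next
    case (Cons b ys)
    with Cons.prems have ab: "(a,b) \<in> A" "dwalk A xs" by (auto simp: dwalk_Cons2)
    show ?thesis
    proof (cases "b \<in> br A w n")
      case True
      then have "w \<in> set xs" using Cons.IH ab Cons.prems Cons by simp
      then show ?thesis by simp
    next
      case False
      have "uadj A a b" using ab by (simp add: uadj_def)
      then have "b = w" using br_closed[OF dg wn, of a b] Cons.prems False by auto
      then show ?thesis using Cons by simp
    qed
  qed
qed




lemma dwalk_snoc:
  assumes dw: "dwalk R xs" and q: "(last xs, q) \<in> R"
  shows "dwalk R (xs @ [q])"
  unfolding dwalk_def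
proof (intro conjI allI impI)
  show "xs @ [q] \<noteq> []" by simp
  fix i assume i: "Suc i < length (xs @ [q])"
  have xne: "xs \<noteq> []" using dw by (simp add: dwalk_def)
  show "((xs @ [q]) ! i, (xs @ [q]) ! Suc i) \<in> R"
  proof (cases "Suc i < length xs")
    case True then show ?thesis using dw by (simp add: dwalk_def nth_append)
  next
    case False
    then have "Suc i = length xs" using i by simp
    then have "i = length xs - 1" by simp
    then show ?thesis using q xne by (simp add: nth_append last_conv_nth)
  qed
qed

lemma dwalk_Ew:
  assumes "dwalk {(x,y). uadj A x y} ys" "w \<notin> set ys"
  shows "dwalk (Ew A w) ys"
  using assms unfolding dwalk_def Ew_def
  by (auto dest: nth_mem)

lemma branch_leaf:
  assumes dt: "ditree V A" and wm: "uadj A w m"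
  shows "\<exists>l\<in>br A w m. leaf V A l"
proof -
  have dg: "digraph V A" using dt by (simp add: ditree_def)
  have finV: "finite V" using dg by (simp add: digraph_def)
  define U where "U = {(x,y). uadj A x y}"
  define P where "P rest = dpath U (w # m # rest)" for rest
  have P0: "P []" using wm digraph_uadj_neq[OF dg wm] by (simp add: P_def U_def dpath_def dwalk_def)
  have bound: "length rest < card V" if "P rest" for rest
  proof -
    have d: "distinct (w # m # rest)" and dw: "dwalk U (w # m # rest)" using that by (auto simp: P_def dpath_def)
    have "set (w # m # rest) \<subseteq> V"
    proof
      fix x assume "x \<in> set (w # m # rest)"
      then have "x \<in> Field U" using dwalk_field[OF dw] by simp
      then show "x \<in> V" using digraph_uadjV[OF dg] by (auto simp: Field_def U_def)
    qed
    then have "card (set (w # m # rest)) \<le> card V" using finV card_mono by blast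
    then show ?thesis using distinct_card[OF d] by simp
  qed
  obtain rest where Pr: "P rest" and rmax: "\<forall>r. P r \<longrightarrow> length r \<le> length rest"
    using ex_has_greatest_nat[of P "[]" length "card V"] P0 bound by blast
  define xs where "xs = w # m # rest"
  define l where "l = last xs"
  define p where "p = xs ! (length xs - 2)"
  have dw: "dwalk U xs" and dist: "distinct xs" using Pr by (auto simp: P_def dpath_def xs_def)
  have lxs: "2 \<le> length xs" by (simp add: xs_def)
  have lnth: "l = xs ! (length xs - 1)" unfolding l_def xs_def by (simp add: last_conv_nth)
  have pl: "(p, l) \<in> U"
  proof -
    have "Suc (length xs - 2) < length xs" "Suc (length xs - 2) = length xs - 1" using lxs by auto
    then show ?thesis using dw unfolding dwalk_def p_def lnth by metis
  qed
  have lbr: "l \<in> br A w m"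
  proof -
    have "dwalk U (m # rest)" using dwalk_Cons2[of U w m rest] dw by (simp add: xs_def)
    moreover have "w \<notin> set (m # rest)" using dist by (simp add: xs_def)
    ultimately have "dwalk (Ew A w) (m # rest)" using dwalk_Ew[of A "m # rest" w] unfolding U_def by metis
    from dwalk_rtrancl[OF this] have "(m, last (m # rest)) \<in> (Ew A w)\<^sup>*" by simp
    then show ?thesis by (simp add: br_def l_def xs_def)
  qed
  have lV: "l \<in> V" "p \<in> V" using pl digraph_uadjV[OF dg] by (auto simp: U_def)
  have nb: "{y \<in> V. uadj A l y} = {p}"
  proof
    show "{p} \<subseteq> {y \<in> V. uadj A l y}" using pl lV uadj_sym by (fastforce simp: U_def)
    show "{y \<in> V. uadj A l y} \<subseteq> {p}"
    proof
      fix q assume q: "q \<in> {y \<in> V. uadj A l y}"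
      show "q \<in> {p}"
      proof (rule ccontr)
        assume qp: "q \<notin> {p}"
        show False
        proof (cases "q \<in> set xs")
          case False
          have "P (rest @ [q])"
          proof -
            have "dwalk U (xs @ [q])" using dwalk_snoc[OF dw] q by (simp add: U_def l_def)
            moreover have "distinct (xs @ [q])" using dist False by simp
            ultimately show ?thesis by (simp add: P_def dpath_def xs_def)
          qed
          then show False using rmax by fastforce
        next
          case True
          then obtain j where j: "j < length xs" "xs ! j = q" by (meson in_set_conv_nth)
          have "q \<noteq> l" using q digraph_uadj_neq[OF dg] by blast
          then have j1: "j \<noteq> length xs - 1" using j lnth by auto
          have "j \<noteq> length xs - 2" using j qp p_def by auto
          then have j3: "j + 3 \<le> length xs" using j j1 lxs by linarith
          define cs where "cs = drop j xs"
          have "ucycle A cs"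
            unfolding ucycle_def
          proof (intro conjI allI impI)
            show "3 \<le> length cs" using j3 by (simp add: cs_def)
            show "distinct cs" using dist by (simp add: cs_def)
            have "hd cs = q" using j by (simp add: cs_def hd_drop_conv_nth)
            moreover have "last cs = l" using j by (simp add: cs_def l_def)
            ultimately show "uadj A (last cs) (hd cs)" using q by simp
            have "dwalk U cs" using dwalk_suffix[of U "take j xs" cs] dw j by (simp add: cs_def)
            then show "uadj A (cs ! i) (cs ! Suc i)" if "Suc i < length cs" for i
              using that by (simp add: dwalk_def U_def)
          qed
          then show False using ucycle_contra[OF dt] by blast
        qed
      qed
    qed
  qed
  have "leaf V A l" using lV nb by (simp add: leaf_def udegree_def)
  then show ?thesis using lbr by blast
qed




definition BG :: "'a set \<Rightarrow> ('a \<times> 'a) set \<Rightarrow> 'a \<Rightarrow> 'a \<Rightarrow> bool" where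
  "BG V A w n \<longleftrightarrow> (\<exists>u\<in>br A w n. (source V A u \<or> leaf V A u) \<and> (u,w) \<in> A\<^sup>*)"

lemma BG_conv: "BG V (A\<inverse>) w n \<longleftrightarrow> (\<exists>v\<in>br A w n. (sink V A v \<or> leaf V A v) \<and> (w,v) \<in> A\<^sup>*)"
  by (simp add: BG_def rtrancl_converse)

lemma half:
  assumes dt: "ditree V A"
    and hyp: "\<And>X. source_set V A X \<Longrightarrow> card X \<ge> 2 \<Longrightarrow> \<exists>v\<in>X. leaf V A v"
    and wm: "uadj A w m" and mw: "(m,w) \<in> A" and nbg: "\<not> BG V A w m"
  shows "(w,m) \<in> A \<and> (\<exists>Z. m \<in> Z \<and> Z \<subseteq> br A w m
     \<and> (\<forall>y\<in>Z. (y,m) \<in> (A \<inter> br A w m \<times> br A w m)\<^sup>* \<and> (m,y) \<in> (A \<inter> br A w m \<times> br A w m)\<^sup>*)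
     \<and> (\<forall>a b. (a,b) \<in> A \<inter> br A w m \<times> br A w m \<longrightarrow> b \<in> Z \<longrightarrow> a \<in> Z)
     \<and> (\<forall>u\<in>Z. \<not> leaf V A u))"
proof -
  have dg: "digraph V A" using dt by (simp add: ditree_def)
  define C where "C = br A w m"
  define R where "R = A \<inter> C \<times> C"
  have CV: "C \<subseteq> V" using br_V[OF dg wm] by (auto simp: C_def)
  have finC: "finite C" using CV dg by (auto simp: digraph_def intro: finite_subset)
  have mC: "m \<in> C" by (simp add: C_def br_self)
  obtain Z where Z: "Z \<noteq> {}" "Z \<subseteq> C" and Zm: "\<forall>y\<in>Z. (y,m) \<in> R\<^sup>*"
    and cl: "\<forall>a b. (a,b) \<in> R \<longrightarrow> b \<in> Z \<longrightarrow> a \<in> Z"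
    and mut: "\<forall>y\<in>Z. \<forall>y'\<in>Z. (y,y') \<in> (R \<inter> Z \<times> Z)\<^sup>*"
  proof -
    have RC: "R \<subseteq> C \<times> C" by (auto simp: R_def)
    show ?thesis using SRC0[OF finC RC mC] that by blast
  qed
  have RA: "R\<^sup>* \<subseteq> A\<^sup>*" by (rule rtrancl_mono) (auto simp: R_def)
  have noS: "\<not> (source V A u \<or> leaf V A u)" if u: "u \<in> Z" for u
  proof
    assume su: "source V A u \<or> leaf V A u"
    have "(u,m) \<in> A\<^sup>*" using Zm u RA by blast
    then have "(u,w) \<in> A\<^sup>*" using mw by (rule rtrancl_into_rtrancl)
    then have "BG V A w m" using su u Z(2) unfolding BG_def C_def by blast
    then show False using nbg by simp
  qed
  have key: "(w,m) \<in> A \<and> m \<in> Z"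
  proof (rule ccontr)
    assume nk: "\<not> ((w,m) \<in> A \<and> m \<in> Z)"
    have RZ: "R \<inter> Z \<times> Z = A \<inter> Z \<times> Z" using Z(2) by (auto simp: R_def)
    have mutA: "\<forall>y\<in>Z. \<forall>y'\<in>Z. (y,y') \<in> (A \<inter> Z \<times> Z)\<^sup>*" using mut unfolding RZ .
    have ZV: "Z \<subseteq> V" using Z(2) CV by blast
    have sc: "strongly_connected V A Z"
      unfolding strongly_connected_def using Z(1) ZV mutA by blast
    have clA: "\<forall>a b. (a,b) \<in> A \<longrightarrow> b \<in> Z \<longrightarrow> a \<in> Z"
    proof (intro allI impI)
      fix a b assume ab: "(a,b) \<in> A" and b: "b \<in> Z"
      show "a \<in> Z"
      proof (cases "a \<in> C")
        case True then show ?thesis using ab b Z(2) cl by (auto simp: R_def)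
      next
        case False
        have "uadj A b a" using ab by (simp add: uadj_def)
        then have "a = w \<and> b = m" using br_boundary[OF dt wm, of b a] b Z(2) False by (auto simp: C_def)
        then show ?thesis using nk ab b by simp
      qed
    qed
    have "source_set V A Z" using scc_closed_source_set[OF sc clA] .
    then obtain u where "u \<in> Z" "source V A u \<or> leaf V A u" using source_set_hasS[OF dg hyp] by blast
    then show False using noS by blast
  qed
  have "\<forall>y\<in>Z. (m,y) \<in> R\<^sup>*"
  proof
    fix y assume "y \<in> Z"
    then have "(m,y) \<in> (R \<inter> Z \<times> Z)\<^sup>*" using mut key by blast
    then show "(m,y) \<in> R\<^sup>*" using rtrancl_mono[of "R \<inter> Z \<times> Z" R] by blast
  qed
  moreover have e: "A \<inter> br A w m \<times> br A w m = R" by (simp add: R_def C_def)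
  moreover have "\<forall>u\<in>Z. \<not> leaf V A u" using noS by blast
  ultimately show ?thesis unfolding e C_def[symmetric]
    using key Z(2) Zm cl by (intro conjI exI[of _ Z]) blast+
qed




lemma exists_BG:
  assumes dt: "ditree V A"
    and hyp: "\<And>X. source_set V A X \<Longrightarrow> card X \<ge> 2 \<Longrightarrow> \<exists>v\<in>X. leaf V A v"
    and w: "w \<in> V" and ns: "\<not> source V A w" and nl: "\<not> leaf V A w"
  shows "\<exists>n. uadj A w n \<and> BG V A w n"
proof -
  have dg: "digraph V A" using dt by (simp add: ditree_def)
  have finV: "finite V" and AV: "A \<subseteq> V \<times> V" using dg by (auto simp: digraph_def)
  obtain Z where Z: "Z \<noteq> {}" "Z \<subseteq> V" and Zw: "\<forall>y\<in>Z. (y,w) \<in> A\<^sup>*"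
    and cl: "\<forall>a b. (a,b) \<in> A \<longrightarrow> b \<in> Z \<longrightarrow> a \<in> Z"
    and mut: "\<forall>y\<in>Z. \<forall>y'\<in>Z. (y,y') \<in> (A \<inter> Z \<times> Z)\<^sup>*"
    using SRC0[OF finV AV w] by blast
  have sc: "strongly_connected V A Z" unfolding strongly_connected_def using Z mut by blast
  have "source_set V A Z" using scc_closed_source_set[OF sc cl] .
  then obtain u where u: "u \<in> Z" "source V A u \<or> leaf V A u" using source_set_hasS[OF dg hyp] by blast
  have uw: "u \<noteq> w" using u ns nl by blast
  obtain n where n: "uadj A w n" "u \<in> br A w n" using br_cover[OF dt w _ uw] u Z(2) by blast
  have "BG V A w n" unfolding BG_def using n u Zw by blast
  then show ?thesis using n by blast
qed

lemma every_nb: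
  assumes dt: "ditree V A"
    and hyp1: "\<And>X. source_set V A X \<Longrightarrow> card X \<ge> 2 \<Longrightarrow> \<exists>v\<in>X. leaf V A v"
    and hyp2: "\<And>X. sink_set V A X \<Longrightarrow> card X \<ge> 2 \<Longrightarrow> \<exists>v\<in>X. leaf V A v"
    and wm: "uadj A w m"
  shows "BG V A w m \<or> BG V (A\<inverse>) w m"
proof (rule ccontr)
  assume nn: "\<not> (BG V A w m \<or> BG V (A\<inverse>) w m)"
  have dt': "ditree V (A\<inverse>)" using dt ditree_converse by blast
  have hyp1': "\<exists>v\<in>X. leaf V (A\<inverse>) v" if "source_set V (A\<inverse>) X" "card X \<ge> 2" for X
    using hyp2 that by (simp add: source_set_converse)
  have wm': "uadj (A\<inverse>) w m" using wm by simp
  have both: "(w,m) \<in> A \<and> (m,w) \<in> A"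
  proof (cases "(m,w) \<in> A")
    case True
    then show ?thesis using half[OF dt hyp1 wm True] nn by blast
  next
    case False
    then have "(w,m) \<in> A" using wm by (simp add: uadj_def)
    then have "(m,w) \<in> A\<inverse>" by simp
    then have "(w,m) \<in> A\<inverse>" using half[OF dt' hyp1' wm' _] nn by blast
    then show ?thesis using False by simp
  qed
  define C where "C = br A w m"
  define R where "R = A \<inter> C \<times> C"
  have RR: "A\<inverse> \<inter> C \<times> C = R\<inverse>" by (auto simp: R_def)
  obtain Z where Z: "m \<in> Z" "Z \<subseteq> C" and Zr: "\<forall>y\<in>Z. (y,m) \<in> R\<^sup>* \<and> (m,y) \<in> R\<^sup>*"
    and cl: "\<forall>a b. (a,b) \<in> R \<longrightarrow> b \<in> Z \<longrightarrow> a \<in> Z" and nl: "\<forall>u\<in>Z. \<not> leaf V A u"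
    using half[OF dt hyp1 wm _] both nn unfolding R_def C_def by blast
  have h2: "\<exists>Z. m \<in> Z \<and> Z \<subseteq> C
     \<and> (\<forall>y\<in>Z. (y,m) \<in> (R\<inverse>)\<^sup>* \<and> (m,y) \<in> (R\<inverse>)\<^sup>*)
     \<and> (\<forall>a b. (a,b) \<in> R\<inverse> \<longrightarrow> b \<in> Z \<longrightarrow> a \<in> Z)"
  proof -
    have "(m,w) \<in> A\<inverse>" using both by simp
    from half[OF dt' hyp1' wm' this] nn
    show ?thesis unfolding br_converse C_def[symmetric] RR by blast
  qed
  then obtain Z' where Z': "m \<in> Z'" "Z' \<subseteq> C" and Zr': "\<forall>y\<in>Z'. (y,m) \<in> (R\<inverse>)\<^sup>* \<and> (m,y) \<in> (R\<inverse>)\<^sup>*"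
    and cl': "\<forall>a b. (a,b) \<in> R\<inverse> \<longrightarrow> b \<in> Z' \<longrightarrow> a \<in> Z'" by blast
  have ZZ': "Z \<subseteq> Z'"
  proof
    fix y assume y: "y \<in> Z"
    then have "(m,y) \<in> R\<^sup>*" using Zr by blast
    then have "(y,m) \<in> (R\<inverse>)\<^sup>*" by (simp add: rtrancl_converse)
    then show "y \<in> Z'" using closed_rtrancl[OF cl' _ Z'(1)] by blast
  qed
  have Z'Z: "Z' \<subseteq> Z"
  proof
    fix y assume y: "y \<in> Z'"
    then have "(m,y) \<in> (R\<inverse>)\<^sup>*" using Zr' by blast
    then have "(y,m) \<in> R\<^sup>*" by (simp add: rtrancl_converse)
    then show "y \<in> Z" using closed_rtrancl[OF cl _ Z(1)] by blast
  qed
  have "C \<subseteq> Z"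
  proof
    fix y assume "y \<in> C"
    then have "(m,y) \<in> (Ew A w)\<^sup>*" by (simp add: C_def br_def)
    then show "y \<in> Z"
    proof (induction rule: rtrancl_induct)
      case base then show ?case using Z(1) .
    next
      case (step y y')
      have yC: "y \<in> C" using step(3) Z(2) by blast
      have y'C: "y' \<in> C" using step(1,2) by (auto simp: C_def br_def intro: rtrancl_into_rtrancl)
      have "uadj A y y'" using step(2) by (simp add: Ew_def)
      then consider "(y,y') \<in> A" | "(y',y) \<in> A" by (auto simp: uadj_def)
      then show ?case
      proof cases
        case 1
        then have "(y',y) \<in> R\<inverse>" using yC y'C by (simp add: R_def)
        moreover have "y \<in> Z'" using step(3) ZZ' by blast
        ultimately have "y' \<in> Z'" using cl' by blast
        then show ?thesis using Z'Z by blast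
      next
        case 2
        then have "(y',y) \<in> R" using yC y'C by (simp add: R_def)
        then show ?thesis using cl step(3) by blast
      qed
    qed
  qed
  moreover obtain l where "l \<in> br A w m" "leaf V A l" using branch_leaf[OF dt wm] by blast
  ultimately show False using nl by (auto simp: C_def)
qed




lemma inner:
  assumes dt: "ditree V A"
    and hyp1: "\<And>X. source_set V A X \<Longrightarrow> card X \<ge> 2 \<Longrightarrow> \<exists>v\<in>X. leaf V A v"
    and hyp2: "\<And>X. sink_set V A X \<Longrightarrow> card X \<ge> 2 \<Longrightarrow> \<exists>v\<in>X. leaf V A v"
    and w: "w \<in> V" and nsk: "\<not> sink V A w" and nsr: "\<not> source V A w" and nl: "\<not> leaf V A w"
  shows "\<exists>u v. u \<in> {v \<in> V. sink V A v \<or> source V A v \<or> leaf V A v}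
           \<and> v \<in> {v \<in> V. sink V A v \<or> source V A v \<or> leaf V A v} \<and> w \<in> interval A u v"
proof -
  have dg: "digraph V A" using dt by (simp add: ditree_def)
  have finV: "finite V" using dg by (simp add: digraph_def)
  have dt': "ditree V (A\<inverse>)" using dt ditree_converse by blast
  have hyp1': "\<exists>v\<in>X. leaf V (A\<inverse>) v" if "source_set V (A\<inverse>) X" "card X \<ge> 2" for X
    using hyp2 that by (simp add: source_set_converse)
  define N where "N = {y \<in> V. uadj A w y}"
  obtain a where "(a,w) \<in> A" using nsr w by (auto simp: source_def)
  then have aN: "a \<in> N" using dg by (auto simp: N_def uadj_def digraph_def)
  have finN: "finite N" using finV by (simp add: N_def)
  have c1: "card N \<noteq> 1" using nl w by (simp add: leaf_def udegree_def N_def)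
  have other: "\<exists>m. uadj A w m \<and> m \<noteq> n" if "uadj A w n" for n
  proof (rule ccontr)
    assume "\<not> (\<exists>m. uadj A w m \<and> m \<noteq> n)"
    then have "N \<subseteq> {n}" by (auto simp: N_def)
    then have "N = {n}" using aN by blast
    then show False using c1 by simp
  qed
  obtain n1 where n1: "uadj A w n1" "BG V A w n1" using exists_BG[OF dt hyp1 w nsr nl] by blast
  obtain n2 where n2: "uadj A w n2" "BG V (A\<inverse>) w n2"
    using exists_BG[OF dt' hyp1' w] nsk nl by auto
  have "\<exists>p q. uadj A w p \<and> uadj A w q \<and> p \<noteq> q \<and> BG V A w p \<and> BG V (A\<inverse>) w q"
  proof (cases "n1 = n2")
    case False then show ?thesis using n1 n2 by blast
  next
    case True
    obtain m where m: "uadj A w m" "m \<noteq> n1" using other[OF n1(1)] by blast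
    from every_nb[OF dt hyp1 hyp2 m(1)] show ?thesis
    proof
      assume "BG V A w m" then show ?thesis using m n2 True by blast
    next
      assume "BG V (A\<inverse>) w m" then show ?thesis using m n1 by blast
    qed
  qed
  then obtain p q where pq: "uadj A w p" "uadj A w q" "p \<noteq> q" "BG V A w p" "BG V (A\<inverse>) w q" by blast
  obtain u where u: "u \<in> br A w p" "source V A u \<or> leaf V A u" "(u,w) \<in> A\<^sup>*"
    using pq(4) by (auto simp: BG_def)
  obtain v where v: "v \<in> br A w q" "sink V A v \<or> leaf V A v" "(w,v) \<in> A\<^sup>*"
    using pq(5) BG_conv by metis
  have "(u,v) \<in> A\<^sup>*" using u(3) v(3) by (rule rtrancl_trans)
  then obtain xs where "dpath A xs" "hd xs = u" "last xs = v" using rtrancl_dpath by metis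
  then obtain ys where ys: "shortest_path A u v ys" using shortest_exists by metis
  then have ys': "dwalk A ys" "hd ys = u" "last ys = v" by (auto simp: shortest_path_def dpath_def)
  have "v \<notin> br A w p" using br_disjoint[OF dt pq(1) pq(2) _ v(1)] pq(3) by blast
  then have "w \<in> set ys" using walk_cross[OF dg pq(1) ys'(1)] ys' u(1) by simp
  then have "w \<in> interval A u v" using ys by (auto simp: interval_def)
  moreover have "u \<in> V" using br_V[OF dg pq(1) u(1)] .
  moreover have "v \<in> V" using br_V[OF dg pq(2) v(1)] .
  ultimately show ?thesis using u(2) v(2) by blast
qed

lemma interval_V:
  assumes dg: "digraph V A" and u: "u \<in> V" and x: "x \<in> interval A u v"
  shows "x \<in> V"
proof -
  obtain ys where ys: "shortest_path A u v ys" "x \<in> set ys" using x by (auto simp: interval_def)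
  then have dw: "dwalk A ys" and h: "hd ys = u" by (auto simp: shortest_path_def dpath_def)
  show ?thesis
  proof (cases "2 \<le> length ys")
    case True
    have "x \<in> Field A" by (rule dwalk_field[OF dw True ys(2)])
    then show ?thesis using dg by (auto simp: Field_def digraph_def)
  next
    case False
    have "ys \<noteq> []" using dw by (simp add: dwalk_def)
    then have "length ys \<noteq> 0" by simp
    then have "length ys = 1" using False by linarith
    then obtain b where "ys = [b]" by (auto simp: length_Suc_conv)
    then show ?thesis using ys(2) h u by simp
  qed
qed

lemma self_interval: "w \<in> interval A w w"
proof -
  have "shortest_path A w w [w]"
    unfolding shortest_path_def dpath_def
    by (auto simp: dwalk_def Suc_le_eq)
  then show ?thesis by (force simp: interval_def)
qed



theorem lemma3:
  fixes V :: "'a set" and A :: "('a \<times> 'a) set"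
  assumes "ditree V A"
    and "\<And>X. source_set V A X \<Longrightarrow> card X \<ge> 2 \<Longrightarrow> \<exists>v\<in>X. leaf V A v"
    and "\<And>X. sink_set V A X \<Longrightarrow> card X \<ge> 2 \<Longrightarrow> \<exists>v\<in>X. leaf V A v"
  shows "geodetic V A {v \<in> V. sink V A v \<or> source V A v \<or> leaf V A v}
    \<and> (\<forall>S'. geodetic V A S' \<longrightarrow>
          card {v \<in> V. sink V A v \<or> source V A v \<or> leaf V A v} \<le> card S')"
proof -
  have dg: "digraph V A" using assms(1) by (simp add: ditree_def)
  define S where "S = {v \<in> V. sink V A v \<or> source V A v \<or> leaf V A v}"
  have "interval_set A S = V"
  proof
    show "interval_set A S \<subseteq> V"
    proof
      fix x assume "x \<in> interval_set A S"
      then obtain u v where uv: "u \<in> S" "v \<in> S" "x \<in> interval A u v \<or> x \<in> interval A v u"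
        unfolding interval_set_def by blast
      have "u \<in> V" "v \<in> V" using uv by (auto simp: S_def)
      then show "x \<in> V" using uv(3) interval_V[OF dg] by blast
    qed
    show "V \<subseteq> interval_set A S"
    proof
      fix w assume w: "w \<in> V"
      show "w \<in> interval_set A S"
      proof (cases "w \<in> S")
        case True
        then show ?thesis using self_interval[of w A] unfolding interval_set_def by blast
      next
        case False
        then have "\<not> sink V A w" "\<not> source V A w" "\<not> leaf V A w" using w by (auto simp: S_def)
        from inner[OF assms(1) assms(2) assms(3) w this] obtain u v where
          "u \<in> S" "v \<in> S" "w \<in> interval A u v" unfolding S_def by blast
        then show ?thesis unfolding interval_set_def by blast
      qed
    qed
  qed
  then have "geodetic V A S" by (auto simp: geodetic_def S_def)
  moreover have "\<forall>S'. geodetic V A S' \<longrightarrow> card S \<le> card S'"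
    using minimality[OF dg] by (simp add: S_def)
  ultimately show ?thesis by (simp add: S_def)
qed

end
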